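(* Let $K$ be a field of characteristic $0$, let $G$ be a finite group and let $M$ be a monomial $G$-module given by a basis $(v_i)_{i\in I}$, an action of $G$ on $I$ and maps $\gamma_i\colon G\to K\setminus\{0\}$ ($i\in I$) with $\gamma_i(gh)=\gamma_{hi}(g)\gamma_i(h)$ and $gv_i=\gamma_i(g)v_{gi}$. Let $\alpha$ be a one-dimensional character of $G$ and let $I(M,\alpha)$ be the set of all $i\in I$ such that $\gamma_i$ and $\alpha^{-1}$ coincide on the stabilizer $G_i$. Then: (i) $I(M,\alpha)$ is a $G$-stable subset of $I$; (ii) $a_\alpha(v_i)=0$ for every $i\in I\setminus I(M,\alpha)$, where $a_\alpha=|G|^{-1}\sum_{g\in G}\alpha(g)g\in KG$ acts on $M$ by $z\mapsto a_\alpha z$.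
   Context: A one-dimensional character of $G$ means a group homomorphism $G\to K^\times$. A monomial $G$-module structure on a $K$-linear space $M$ is given by: a basis $(v_i)_{i\in I}$ of $M$; an action of $G$ on the index set $I$; a family of maps $\gamma_i\colon G\to K\setminus\{0\}$, $i\in I$, satisfying $\gamma_i(gh)=\gamma_{hi}(g)\gamma_i(h)$ for all $i\in I$, $g,h\in G$; the action of $G$ on $M$ is then $gv_i=\gamma_i(g)v_{gi}$. $G_i$ denotes the stabilizer of $i\in I$ in $G$. *)

theory Defs
  imports "HOL.Vector_Spaces" "HOL-Algebra.Group_Action"
begin

definition one_dim_char :: "('g, 'b) monoid_scheme \<Rightarrow> ('g \<Rightarrow> 'k::field) \<Rightarrow> bool" where
  "one_dim_char G \<alpha> \<longleftrightarrow>
     (\<forall>g \<in> carrier G. \<alpha> g \<noteq> 0) \<and>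
     (\<forall>g \<in> carrier G. \<forall>h \<in> carrier G. \<alpha> (g \<otimes>\<^bsub>G\<^esub> h) = \<alpha> g * \<alpha> h)"

definition monomial_module ::
  "('g, 'b) monoid_scheme \<Rightarrow> 'i set \<Rightarrow> ('g \<Rightarrow> 'i \<Rightarrow> 'i) \<Rightarrow> ('i \<Rightarrow> 'g \<Rightarrow> 'k::field)
   \<Rightarrow> ('k \<Rightarrow> 'm::ab_group_add \<Rightarrow> 'm) \<Rightarrow> ('i \<Rightarrow> 'm) \<Rightarrow> ('g \<Rightarrow> 'm \<Rightarrow> 'm) \<Rightarrow> bool" where
  "monomial_module G I \<phi> \<gamma> scale v \<rho> \<longleftrightarrow>
     Vector_Spaces.vector_space scale \<and>
     inj_on v I \<and> \<not> Modules.module.dependent scale (v ` I) \<and> Modules.module.span scale (v ` I) = UNIV \<and>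
     group_action G I \<phi> \<and>
     (\<forall>i \<in> I. \<forall>g \<in> carrier G. \<gamma> i g \<noteq> 0) \<and>
     (\<forall>i \<in> I. \<forall>g \<in> carrier G. \<forall>h \<in> carrier G.
        \<gamma> i (g \<otimes>\<^bsub>G\<^esub> h) = \<gamma> (\<phi> h i) g * \<gamma> i h) \<and>
     (\<forall>g \<in> carrier G. Vector_Spaces.linear scale scale (\<rho> g)) \<and>
     (\<forall>g \<in> carrier G. \<forall>i \<in> I. \<rho> g (v i) = scale (\<gamma> i g) (v (\<phi> g i)))"

definition I_M_alpha ::
  "('g, 'b) monoid_scheme \<Rightarrow> 'i set \<Rightarrow> ('g \<Rightarrow> 'i \<Rightarrow> 'i) \<Rightarrow> ('i \<Rightarrow> 'g \<Rightarrow> 'k::field)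
   \<Rightarrow> ('g \<Rightarrow> 'k) \<Rightarrow> 'i set" where
  "I_M_alpha G I \<phi> \<gamma> \<alpha> = {i \<in> I. \<forall>g \<in> stabilizer G \<phi> i. \<gamma> i g = inverse (\<alpha> g)}"

definition a_alpha ::
  "('g, 'b) monoid_scheme \<Rightarrow> ('k::field \<Rightarrow> 'm::ab_group_add \<Rightarrow> 'm) \<Rightarrow> ('g \<Rightarrow> 'm \<Rightarrow> 'm)
   \<Rightarrow> ('g \<Rightarrow> 'k) \<Rightarrow> 'm \<Rightarrow> 'm" where
  "a_alpha G scale \<rho> \<alpha> z =
     scale (inverse (of_nat (card (carrier G))))
       (\<Sum>g \<in> carrier G. scale (\<alpha> g) (\<rho> g z))"

end

theory Submission
  imports Defs
begin

theorem lemma1p2p2: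
  fixes G :: "('g, 'b) monoid_scheme"
    and I :: "'i set"
    and \<phi> :: "'g \<Rightarrow> 'i \<Rightarrow> 'i"
    and \<gamma> :: "'i \<Rightarrow> 'g \<Rightarrow> 'k::field_char_0"
    and scale :: "'k \<Rightarrow> 'm::ab_group_add \<Rightarrow> 'm"
    and v :: "'i \<Rightarrow> 'm"
    and \<rho> :: "'g \<Rightarrow> 'm \<Rightarrow> 'm"
    and \<alpha> :: "'g \<Rightarrow> 'k"
  assumes "group G" and "finite (carrier G)"
    and "monomial_module G I \<phi> \<gamma> scale v \<rho>"
    and "one_dim_char G \<alpha>"
  shows "(\<forall>g \<in> carrier G. \<forall>i \<in> I_M_alpha G I \<phi> \<gamma> \<alpha>. \<phi> g i \<in> I_M_alpha G I \<phi> \<gamma> \<alpha>)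
         \<and> (\<forall>i \<in> I - I_M_alpha G I \<phi> \<gamma> \<alpha>. a_alpha G scale \<rho> \<alpha> (v i) = 0)"
proof -
  interpret grp: group G by fact
  have MM: "Vector_Spaces.vector_space scale" "group_action G I \<phi>"
    "\<forall>i \<in> I. \<forall>g \<in> carrier G. \<gamma> i g \<noteq> 0"
    "\<forall>i \<in> I. \<forall>g \<in> carrier G. \<forall>h \<in> carrier G.
        \<gamma> i (g \<otimes>\<^bsub>G\<^esub> h) = \<gamma> (\<phi> h i) g * \<gamma> i h"
    "\<forall>g \<in> carrier G. \<forall>i \<in> I. \<rho> g (v i) = scale (\<gamma> i g) (v (\<phi> g i))"
    using assms(3) unfolding monomial_module_def by auto
  interpret vs: vector_space scale by (fact MM(1))
  interpret ga: group_action G I \<phi> by (fact MM(2))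
  have a0: "\<forall>g \<in> carrier G. \<alpha> g \<noteq> 0"
    and am: "\<forall>g \<in> carrier G. \<forall>h \<in> carrier G. \<alpha> (g \<otimes>\<^bsub>G\<^esub> h) = \<alpha> g * \<alpha> h"
    using assms(4) unfolding one_dim_char_def by auto
  have a1: "\<alpha> \<one>\<^bsub>G\<^esub> = 1"
  proof -
    have "\<alpha> \<one>\<^bsub>G\<^esub> = \<alpha> \<one>\<^bsub>G\<^esub> * \<alpha> \<one>\<^bsub>G\<^esub>" using am by (metis grp.one_closed grp.l_one)
    then show ?thesis using a0 by (metis grp.one_closed mult_cancel_right1)
  qed
  have ainv: "\<alpha> (inv\<^bsub>G\<^esub> g) * \<alpha> g = 1" if "g \<in> carrier G" for g
    using am a1 that by (metis grp.inv_closed grp.l_inv)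
  have stabI: "i \<in> I \<Longrightarrow> k \<in> stabilizer G \<phi> i \<Longrightarrow> g \<in> carrier G \<Longrightarrow> \<gamma> i (g \<otimes>\<^bsub>G\<^esub> k) = \<gamma> i g * \<gamma> i k" for i k g
    using MM(4) by (simp add: stabilizer_def)
  have part1: "\<phi> g i \<in> I_M_alpha G I \<phi> \<gamma> \<alpha>" if g: "g \<in> carrier G" and i: "i \<in> I_M_alpha G I \<phi> \<gamma> \<alpha>" for g i
  proof -
    have iI: "i \<in> I" and iS: "\<forall>k \<in> stabilizer G \<phi> i. \<gamma> i k = inverse (\<alpha> k)"
      using i unfolding I_M_alpha_def by auto
    have giI: "\<phi> g i \<in> I" using g iI ga.element_image by blast
    have "\<gamma> (\<phi> g i) h = inverse (\<alpha> h)" if h: "h \<in> stabilizer G \<phi> (\<phi> g i)" for h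
    proof -
      have hc: "h \<in> carrier G" and hfix: "\<phi> h (\<phi> g i) = \<phi> g i" using h by (auto simp: stabilizer_def)
      define k where "k = inv\<^bsub>G\<^esub> g \<otimes>\<^bsub>G\<^esub> h \<otimes>\<^bsub>G\<^esub> g"
      have kc: "k \<in> carrier G" using hc g by (simp add: k_def)
      have hg: "h \<otimes>\<^bsub>G\<^esub> g = g \<otimes>\<^bsub>G\<^esub> k" using hc g
        by (simp add: k_def grp.m_assoc[symmetric] grp.r_inv)
      have one: "\<phi> \<one>\<^bsub>G\<^esub> i = i"
        by (metis iI ga.id_eq_one restrict_apply')
      have ig: "inv\<^bsub>G\<^esub> g \<in> carrier G" using g by simp
      have "\<phi> k i = \<phi> (inv\<^bsub>G\<^esub> g \<otimes>\<^bsub>G\<^esub> h) (\<phi> g i)"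
        unfolding k_def using ga.composition_rule[OF iI grp.m_closed[OF ig hc] g] .
      also have "\<dots> = \<phi> (inv\<^bsub>G\<^esub> g) (\<phi> h (\<phi> g i))"
        using ga.composition_rule[OF giI ig hc] .
      also have "\<dots> = \<phi> (inv\<^bsub>G\<^esub> g) (\<phi> g i)" using hfix by simp
      also have "\<dots> = \<phi> (inv\<^bsub>G\<^esub> g \<otimes>\<^bsub>G\<^esub> g) i"
        using ga.composition_rule[OF iI ig g] by simp
      also have "\<dots> = i" using g one by simp
      finally have ks: "k \<in> stabilizer G \<phi> i" using kc by (simp add: stabilizer_def)
      have "\<gamma> (\<phi> g i) h * \<gamma> i g = \<gamma> i (h \<otimes>\<^bsub>G\<^esub> g)" using MM(4) iI hc g by simp
      also have "\<dots> = \<gamma> i g * \<gamma> i k" using hg stabI[OF iI ks g] by simp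
      finally have e1: "\<gamma> (\<phi> g i) h = \<gamma> i k" using MM(3) iI g by (simp add: mult.commute)
      have "\<alpha> k = \<alpha> (inv\<^bsub>G\<^esub> g) * \<alpha> h * \<alpha> g" using am hc g by (simp add: k_def)
      also have "\<dots> = \<alpha> h" using ainv[OF g] by (metis mult.commute mult.left_commute mult_1_right)
      finally show ?thesis using e1 iS ks by simp
    qed
    then show ?thesis using giI unfolding I_M_alpha_def by auto
  qed
  have part2: "a_alpha G scale \<rho> \<alpha> (v i) = 0" if i: "i \<in> I - I_M_alpha G I \<phi> \<gamma> \<alpha>" for i
  proof -
    have iI: "i \<in> I" using i by auto
    obtain k where ks: "k \<in> stabilizer G \<phi> i" and kne: "\<gamma> i k \<noteq> inverse (\<alpha> k)"
      using i unfolding I_M_alpha_def by auto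
    have kc: "k \<in> carrier G" and kfix: "\<phi> k i = i" using ks by (auto simp: stabilizer_def)
    define c where "c = \<alpha> k * \<gamma> i k"
    have c1: "c \<noteq> 1" using kne a0 kc unfolding c_def by (metis inverse_unique mult.commute)
    define f where "f g = scale (\<alpha> g * \<gamma> i g) (v (\<phi> g i))" for g
    have S: "(\<Sum>g \<in> carrier G. scale (\<alpha> g) (\<rho> g (v i))) = sum f (carrier G)"
      using MM(5) iI by (intro sum.cong) (auto simp: f_def)
    have fk: "f (g \<otimes>\<^bsub>G\<^esub> k) = scale c (f g)" if g: "g \<in> carrier G" for g
    proof -
      have "\<phi> (g \<otimes>\<^bsub>G\<^esub> k) i = \<phi> g i" using ga.composition_rule[OF iI g kc] kfix by simp
      then show ?thesis using am g kc stabI[OF iI ks g]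
        by (simp add: f_def c_def mult_ac)
    qed
    have bij: "bij_betw (\<lambda>g. g \<otimes>\<^bsub>G\<^esub> k) (carrier G) (carrier G)"
      by (rule bij_betwI[where g="\<lambda>g. g \<otimes>\<^bsub>G\<^esub> inv\<^bsub>G\<^esub> k"])
         (auto simp: kc grp.m_assoc grp.r_inv grp.l_inv)
    have "sum f (carrier G) = sum (f \<circ> (\<lambda>g. g \<otimes>\<^bsub>G\<^esub> k)) (carrier G)"
      using sum.reindex_bij_betw[OF bij, of f] by simp
    also have "\<dots> = scale c (sum f (carrier G))"
      by (simp add: vs.scale_sum_right fk)
    finally have "scale (c - 1) (sum f (carrier G)) = 0"
      by (simp add: vs.scale_left_diff_distrib)
    then have "sum f (carrier G) = 0" using c1 by simp
    then show ?thesis unfolding a_alpha_def S by simp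
  qed
  show ?thesis using part1 part2 by blast
qed

end
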